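(* Let $k \geq 2$ be an integer and let $G=(V,E)$ be a $k$-connected graph with $n \geq 3$ vertices, $e$ edges, minimum degree $\delta$ and maximum degree $\Delta$. If any one of the following five conditions holds, then $G$ is Hamiltonian: [1] $$Z_1(G) \geq (n - k - 1)\Delta^2 + \frac{e^2}{2(k + 1)} + \frac{(k + 1) \Delta^3}{2 \delta};$$ [2] $$F(G) \leq (n - k - 1) \delta^3 + \frac{\delta (2 (k + 1)^2 \delta^2 - e^2)}{k + 1};$$ [3] $$F(G) \leq (n - k - 1) \delta^3 + \frac{\delta}{k + 1} \left( 2 (k + 1) \left((k + 1) \delta^2 + \frac{e^2}{n - k - 1}\right) - e^2 - 2 (k + 1) (n - k - 1) \Delta^2\right);$$ [4] $$Inv(G) \leq \frac{n - k - 1}{\Delta} + \frac{2 (k + 1)^2 \delta^2 - e^2}{(k + 1) \Delta^3};$$ [5] $$Inv(G) \leq \frac{n - k - 1}{\Delta} + \frac{1}{(k + 1) \Delta^3} \left( 2 (k + 1) \left((k + 1) \delta^2 + \frac{e^2}{n - k - 1}\right) - e^2 - 2 (k + 1) (n - k - 1) \Delta^2\right).$$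
   Context: Graphs are finite, undirected, without loops or multiple edges. $d(u)$ denotes the degree of vertex $u$; $\delta$ and $\Delta$ are the minimum and maximum degrees. The first Zagreb index is $Z_1(G)=\sum_{u\in V} d(u)^2$, the forgotten topological index is $F(G)=\sum_{u\in V} d(u)^3$, and the inverse degree is $Inv(G)=\sum_{u\in V}\frac{1}{d(u)}$. A graph is Hamiltonian if it has a cycle containing all its vertices. *)

theory Defs
  imports Main "HOL-Library.Multiset" Complex_Main
begin

definition simple_graph :: "'a set \<Rightarrow> 'a set set \<Rightarrow> bool" where
  "simple_graph V E \<longleftrightarrow> finite V \<and>
     (\<forall>e\<in>E. \<exists>u v. e = {u, v} \<and> u \<noteq> v \<and> u \<in> V \<and> v \<in> V)"

definition degree :: "'a set \<Rightarrow> 'a set set \<Rightarrow> 'a \<Rightarrow> nat" where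
  "degree V E u = card {v\<in>V. {u, v} \<in> E}"

definition min_degree :: "'a set \<Rightarrow> 'a set set \<Rightarrow> nat" where
  "min_degree V E = Min (degree V E ` V)"

definition max_degree :: "'a set \<Rightarrow> 'a set set \<Rightarrow> nat" where
  "max_degree V E = Max (degree V E ` V)"

definition zagreb1 :: "'a set \<Rightarrow> 'a set set \<Rightarrow> real" where
  "zagreb1 V E = (\<Sum>u\<in>V. real (degree V E u) ^ 2)"

definition forgotten_index :: "'a set \<Rightarrow> 'a set set \<Rightarrow> real" where
  "forgotten_index V E = (\<Sum>u\<in>V. real (degree V E u) ^ 3)"

definition inverse_degree :: "'a set \<Rightarrow> 'a set set \<Rightarrow> real" where
  "inverse_degree V E = (\<Sum>u\<in>V. 1 / real (degree V E u))"

definition graph_connected :: "'a set \<Rightarrow> 'a set set \<Rightarrow> bool" where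
  "graph_connected V E \<longleftrightarrow>
     (\<forall>u\<in>V. \<forall>v\<in>V. (\<lambda>x y. {x, y} \<in> E)\<^sup>*\<^sup>* u v)"

definition k_connected :: "'a set \<Rightarrow> 'a set set \<Rightarrow> nat \<Rightarrow> bool" where
  "k_connected V E k \<longleftrightarrow> card V > k \<and>
     (\<forall>S \<subseteq> V. card S < k \<longrightarrow> graph_connected (V - S) {e\<in>E. e \<subseteq> V - S})"

definition hamiltonian :: "'a set \<Rightarrow> 'a set set \<Rightarrow> bool" where
  "hamiltonian V E \<longleftrightarrow> (\<exists>vs. distinct vs \<and> set vs = V \<and> length vs \<ge> 3 \<and>
     (\<forall>i < length vs - 1. {vs ! i, vs ! Suc i} \<in> E) \<and> {last vs, hd vs} \<in> E)"

end

theory Submission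
  imports Defs
begin


fun walk :: "('a \<Rightarrow> 'a \<Rightarrow> bool) \<Rightarrow> 'a list \<Rightarrow> bool" where
  "walk R [] = True"
| "walk R [x] = True"
| "walk R (x # y # xs) = (R x y \<and> walk R (y # xs))"

lemma walk_Cons: "walk R (x # xs) \<longleftrightarrow> walk R xs \<and> (xs \<noteq> [] \<longrightarrow> R x (hd xs))"
  by (cases xs) auto

lemma walk_append:
  "walk R (xs @ ys) \<longleftrightarrow> walk R xs \<and> walk R ys \<and> (xs \<noteq> [] \<longrightarrow> ys \<noteq> [] \<longrightarrow> R (last xs) (hd ys))"
  by (induction xs) (auto simp: walk_Cons)

lemma walk_rev:
  assumes "\<And>x y. R x y \<Longrightarrow> R y x"
  shows "walk R xs \<Longrightarrow> walk R (rev xs)"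
  by (induction xs) (auto simp: walk_Cons walk_append assms hd_rev last_rev)

lemma walk_mono: "walk R xs \<Longrightarrow> (\<And>x y. R x y \<Longrightarrow> R' x y) \<Longrightarrow> walk R' xs"
  by (induction xs) (auto simp: walk_Cons)

lemma walk_nth: "walk R xs \<Longrightarrow> i < length xs - 1 \<Longrightarrow> R (xs ! i) (xs ! Suc i)"
proof (induction xs arbitrary: i)
  case Nil then show ?case by simp
next
  case (Cons x xs)
  then show ?case
    by (cases i) (auto simp: walk_Cons hd_conv_nth)
qed

lemma path_exists:
  assumes "R\<^sup>*\<^sup>* u v"
  shows "\<exists>p. p \<noteq> [] \<and> hd p = u \<and> last p = v \<and> distinct p \<and> walk R p \<and> set p \<subseteq> {z. R\<^sup>*\<^sup>* u z}"
  using assms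
proof (induction rule: rtranclp_induct)
  case base
  then show ?case by (intro exI[of _ "[u]"]) auto
next
  case (step y z)
  then obtain p where p: "p \<noteq> []" "hd p = u" "last p = y" "distinct p" "walk R p" "set p \<subseteq> {z. R\<^sup>*\<^sup>* u z}"
    by blast
  show ?case
  proof (cases "z \<in> set p")
    case True
    then obtain p1 p2 where pp: "p = p1 @ z # p2" by (meson split_list)
    have "walk R (p1 @ [z])" using p(5) unfolding pp walk_append by (auto simp: walk_Cons)
    moreover have "hd (p1 @ [z]) = u" using p(2) pp by (cases p1) auto
    ultimately show ?thesis using p pp by (intro exI[of _ "p1 @ [z]"]) auto
  next
    case False
    have "walk R (p @ [z])" using p step by (auto simp: walk_append)
    then show ?thesis using p step False by (intro exI[of _ "p @ [z]"]) auto
  qed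
qed

definition cyc :: "('a \<Rightarrow> 'a \<Rightarrow> bool) \<Rightarrow> 'a list \<Rightarrow> bool" where
  "cyc R vs \<longleftrightarrow> distinct vs \<and> length vs \<ge> 3 \<and> walk R vs \<and> R (last vs) (hd vs)"

definition csucc :: "'a list \<Rightarrow> 'a \<Rightarrow> 'a \<Rightarrow> bool" where
  "csucc vs u v \<longleftrightarrow> (\<exists>p q. vs = p @ u # v # q) \<or> (vs \<noteq> [] \<and> u = last vs \<and> v = hd vs)"

lemma cyc_rotate1: "cyc R vs \<Longrightarrow> cyc R (rotate1 vs)"
proof (cases vs)
  case (Cons x xs)
  assume c: "cyc R vs"
  then have "xs \<noteq> []" using Cons by (auto simp: cyc_def)
  then show ?thesis using c Cons by (auto simp: cyc_def walk_append walk_Cons)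
qed (simp add: cyc_def)

lemma csucc_rotate1: "csucc vs u v \<Longrightarrow> csucc (rotate1 vs) u v"
proof (cases vs)
  case Nil
  then show "csucc vs u v \<Longrightarrow> ?thesis" by (simp add: csucc_def)
next
  case (Cons x xs)
  assume c: "csucc vs u v"
  show ?thesis
  proof (cases "\<exists>p q. vs = p @ u # v # q")
    case True
    then obtain p q where pq: "vs = p @ u # v # q" by blast
    show ?thesis
    proof (cases p)
      case Nil
      then show ?thesis using pq Cons by (auto simp: csucc_def)
    next
      case (Cons a p')
      then have "rotate1 vs = p' @ u # v # (q @ [a])" using pq by simp
      then show ?thesis unfolding csucc_def by blast
    qed
  next
    case False
    then have uv: "u = last vs" "v = hd vs" using c Cons by (auto simp: csucc_def)
    show ?thesis
    proof (cases "xs = []")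
      case True
      then show ?thesis using uv Cons by (auto simp: csucc_def)
    next
      case False
      then have "rotate1 vs = butlast xs @ u # v # []" using uv Cons by simp
      then show ?thesis unfolding csucc_def by blast
    qed
  qed
qed

lemma rotate_props:
  "cyc R vs \<Longrightarrow> cyc R (rotate n vs) \<and> (\<forall>a b. csucc vs a b \<longrightarrow> csucc (rotate n vs) a b)"
  by (induction n) (auto simp: cyc_rotate1 csucc_rotate1)

lemma rot_to:
  assumes "cyc R vs" "csucc vs u v"
  shows "\<exists>ws. cyc R ws \<and> set ws = set vs \<and> length ws = length vs \<and>
     (\<forall>a b. csucc vs a b \<longrightarrow> csucc ws a b) \<and> hd ws = v \<and> last ws = u"
proof (cases "\<exists>p q. vs = p @ u # v # q")
  case True
  then obtain p q where pq: "vs = p @ u # v # q" by blast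
  have "rotate (length (p @ [u])) vs = v # q @ p @ [u]"
    using rotate_append[of "p @ [u]" "v # q"] pq by simp
  then show ?thesis using rotate_props[OF assms(1), of "length (p @ [u])"] pq
    by (intro exI[of _ "rotate (length (p @ [u])) vs"]) (simp, auto)
next
  case False
  then show ?thesis using assms by (intro exI[of _ vs]) (auto simp: csucc_def)
qed

lemma csucc_split:
  assumes "distinct ws" "ws \<noteq> []" "csucc ws w w'" "w \<noteq> last ws"
  shows "\<exists>P1 P2. ws = P1 @ P2 \<and> P1 \<noteq> [] \<and> P2 \<noteq> [] \<and> last P1 = w \<and> hd P2 = w' \<and> hd P1 = hd ws \<and> last P2 = last ws"
proof -
  obtain p q where pq: "ws = p @ w # w' # q" using assms by (auto simp: csucc_def)
  show ?thesis using pq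
    by (intro exI[of _ "p @ [w]"] exI[of _ "w' # q"]) (cases p; auto)
qed

lemma csucc_exists: "x \<in> set vs \<Longrightarrow> \<exists>v. csucc vs x v"
proof -
  assume "x \<in> set vs"
  then obtain p q where pq: "vs = p @ x # q" by (meson split_list)
  show ?thesis
  proof (cases q)
    case Nil then show ?thesis using pq by (auto simp: csucc_def)
  next
    case (Cons a q') then show ?thesis using pq by (auto simp: csucc_def)
  qed
qed

lemma csucc_set: "csucc vs u v \<Longrightarrow> u \<in> set vs \<and> v \<in> set vs"
  by (auto simp: csucc_def)

lemma csucc_adj: "cyc R vs \<Longrightarrow> csucc vs u v \<Longrightarrow> R u v"
  by (auto simp: csucc_def cyc_def walk_append walk_Cons)

lemma csucc_unique:
  assumes "cyc R vs" "csucc vs u v" "csucc vs u v'"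
  shows "v = v'"
proof -
  obtain ws where ws: "cyc R ws" "csucc ws u v'" "hd ws = v" "last ws = u"
    using rot_to[OF assms(1,2)] assms(3) by blast
  have d: "distinct ws" "ws \<noteq> []" using ws(1) by (auto simp: cyc_def)
  show ?thesis
  proof (cases "\<exists>p q. ws = p @ u # v' # q")
    case True
    then obtain p q where pq: "ws = p @ u # v' # q" by blast
    then have "last ws \<in> set (v' # q)" by simp
    then show ?thesis using d pq ws(4) by auto
  next
    case False then show ?thesis using ws by (auto simp: csucc_def)
  qed
qed

lemma csucc_inj:
  assumes "cyc R vs" "csucc vs u v" "csucc vs u' v"
  shows "u = u'"
proof -
  obtain ws where ws: "cyc R ws" "csucc ws u' v" "hd ws = v" "last ws = u"
    using rot_to[OF assms(1,2)] assms(3) by blast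
  have d: "distinct ws" "ws \<noteq> []" using ws(1) by (auto simp: cyc_def)
  show ?thesis
  proof (cases "\<exists>p q. ws = p @ u' # v # q")
    case True
    then obtain p q where pq: "ws = p @ u' # v # q" by blast
    then have "hd ws \<in> set (p @ [u'])" by (cases p) auto
    then show ?thesis using d pq ws(3) by auto
  next
    case False then show ?thesis using ws by (auto simp: csucc_def)
  qed
qed

lemma extend_cyc:
  assumes "cyc R vs" "Q \<noteq> []" "distinct Q" "walk R Q" "set Q \<inter> set vs = {}"
    "R (last vs) (hd Q)" "R (last Q) (hd vs)"
  shows "cyc R (vs @ Q) \<and> length (vs @ Q) > length vs"
proof -
  have "vs \<noteq> []" using assms(1) by (auto simp: cyc_def)
  then show ?thesis using assms by (auto simp: cyc_def walk_append)
qed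

lemma reroute:
  assumes sym: "\<And>x y. R x y \<Longrightarrow> R y x"
    and c: "cyc R (P1 @ P2)" and ne: "P1 \<noteq> []" "P2 \<noteq> []" "Q1 \<noteq> []"
    and d: "distinct Q1" "distinct Q2" and w: "walk R Q1" "walk R Q2"
    and dj: "set Q1 \<inter> set (P1 @ P2) = {}" "set Q2 \<inter> set (P1 @ P2) = {}" "set Q1 \<inter> set Q2 = {}"
    and a: "R (last P2) (hd Q1)" "R (last Q1) (last P1)"
    and b: "if Q2 = [] then R (hd P1) (hd P2) else R (hd P1) (hd Q2) \<and> R (last Q2) (hd P2)"
  shows "cyc R (rev P1 @ Q2 @ P2 @ Q1) \<and> length (rev P1 @ Q2 @ P2 @ Q1) > length (P1 @ P2)
     \<and> set (rev P1 @ Q2 @ P2 @ Q1) = set (P1 @ P2) \<union> set Q1 \<union> set Q2"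
proof -
  have wp: "walk R P1" "walk R P2" using c by (auto simp: cyc_def walk_append)
  have wr: "walk R (rev P1)" using walk_rev[OF sym wp(1)] by blast
  have dd: "distinct (rev P1 @ Q2 @ P2 @ Q1)" using c d dj by (auto simp: cyc_def)
  have w1: "walk R (P2 @ Q1)" using wp w a ne by (auto simp: walk_append)
  have w2: "walk R (Q2 @ P2 @ Q1)"
  proof (cases "Q2 = []")
    case True then show ?thesis using w1 by simp
  next
    case False then show ?thesis using w1 w b ne by (auto simp: walk_append)
  qed
  have h2: "R (hd P1) (hd (Q2 @ P2 @ Q1))" using b ne by (cases "Q2 = []") auto
  have w3: "walk R (rev P1 @ Q2 @ P2 @ Q1)"
    using wr w2 h2 ne by (auto simp: walk_append last_rev)
  have cl: "R (last (rev P1 @ Q2 @ P2 @ Q1)) (hd (rev P1 @ Q2 @ P2 @ Q1))"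
    using a ne by (auto simp: hd_rev)
  have len: "length (rev P1 @ Q2 @ P2 @ Q1) > length (P1 @ P2)" using ne by simp
  then show ?thesis using dd w3 cl c by (auto simp: cyc_def)
qed




lemma rtranclp_sym:
  assumes "\<And>x y. R x y \<Longrightarrow> R y x" "R\<^sup>*\<^sup>* u v"
  shows "R\<^sup>*\<^sup>* v u"
  using assms(2)
proof (induction rule: rtranclp_induct)
  case (step y z)
  then show ?case using assms(1) by (meson converse_rtranclp_into_rtranclp)
qed simp

locale sgraph =
  fixes V :: "'a set" and E :: "'a set set"
  assumes sg: "simple_graph V E"
begin

abbreviation adj where "adj x y \<equiv> {x, y} \<in> E"

lemma adjV: "adj x y \<Longrightarrow> x \<in> V \<and> y \<in> V \<and> x \<noteq> y"
  using sg unfolding simple_graph_def by (metis doubleton_eq_iff)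

lemma adj_sym: "adj x y \<Longrightarrow> adj y x"
  by (simp add: insert_commute)

lemma finV: "finite V" using sg by (simp add: simple_graph_def)

lemma deg2:
  assumes k2: "k \<ge> 2" and kc: "k_connected V E k" and n3: "card V \<ge> 3" and y: "y \<in> V"
  shows "\<exists>a b. a \<noteq> b \<and> adj y a \<and> adj y b"
proof (rule ccontr)
  assume na: "\<not> ?thesis"
  define N where "N = {v\<in>V. adj y v}"
  have fN: "finite N" using finV by (simp add: N_def)
  have cN: "card N \<le> 1"
  proof (rule ccontr)
    assume "\<not> card N \<le> 1"
    then obtain a b where "a \<in> N" "b \<in> N" "a \<noteq> b"
      using card_le_Suc0_iff_eq[OF fN] by auto
    then have "adj y a" "adj y b" by (auto simp: N_def)
    then show False using na \<open>a \<noteq> b\<close> by blast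
  qed
  have NV: "N \<subseteq> V" by (auto simp: N_def)
  have conn: "graph_connected (V - N) {e\<in>E. e \<subseteq> V - N}"
  proof -
    have "card N < k" using cN k2 by linarith
    then show ?thesis using kc NV unfolding k_connected_def by blast
  qed
  have yN: "y \<notin> N" using adjV[of y y] by (auto simp: N_def)
  have "card (insert y N) \<le> 2" using cN fN yN by simp
  then have "\<not> V \<subseteq> insert y N"
  proof -
    assume c2: "card (insert y N) \<le> 2"
    show ?thesis
    proof
      assume "V \<subseteq> insert y N"
      then have "card V \<le> card (insert y N)" using card_mono[of "insert y N" V] fN by simp
      then show False using c2 n3 by linarith
    qed
  qed
  then obtain z where z: "z \<in> V" "z \<noteq> y" "z \<notin> N" by auto
  have yV: "y \<in> V - N" "z \<in> V - N" using z y yN by auto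
  have "(\<lambda>x w. {x, w} \<in> {e\<in>E. e \<subseteq> V - N})\<^sup>*\<^sup>* y z"
    using conn yV unfolding graph_connected_def by blast
  then obtain w where "{y, w} \<in> {e\<in>E. e \<subseteq> V - N}"
    using z(2) by (cases rule: converse_rtranclpE) auto
  then have "adj y w" "w \<in> V" "w \<notin> N" by auto
  then show False unfolding N_def by blast
qed

lemma cycle_exists:
  assumes d2: "\<forall>y\<in>V. \<exists>a b. a \<noteq> b \<and> adj y a \<and> adj y b" and ne: "V \<noteq> {}"
  shows "\<exists>C. cyc adj C \<and> set C \<subseteq> V"
proof -
  define P where "P l = (\<exists>p. p \<noteq> [] \<and> distinct p \<and> walk adj p \<and> set p \<subseteq> V \<and> length p = l)" for l
  obtain v where v: "v \<in> V" using ne by auto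
  have P1: "P 1" unfolding P_def using v by (intro exI[of _ "[v]"]) auto
  have bnd: "\<forall>l. P l \<longrightarrow> l \<le> card V"
    unfolding P_def using finV card_mono distinct_card by metis
  obtain l where l: "P l" "\<forall>l'. P l' \<longrightarrow> l' \<le> l" using Nat.ex_has_greatest_nat[OF P1 bnd] by blast
  then obtain p where p: "p \<noteq> []" "distinct p" "walk adj p" "set p \<subseteq> V" "length p = l"
    unfolding P_def by blast
  have inp: "a \<in> set p" if "adj (hd p) a" for a
  proof (rule ccontr)
    assume "a \<notin> set p"
    then have "P (Suc l)" unfolding P_def using p that adjV adj_sym
      by (intro exI[of _ "a # p"]) (auto simp: walk_Cons)
    then show False using l by fastforce
  qed
  have "hd p \<in> V" using p hd_in_set by blast
  then obtain a b where ab: "a \<noteq> b" "adj (hd p) a" "adj (hd p) b" using d2 by blast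
  obtain w where w: "adj (hd p) w" "w \<noteq> hd (tl p)"
  proof (cases "a = hd (tl p)")
    case True then show ?thesis using that ab by blast
  next
    case False then show ?thesis using that ab by blast
  qed
  have wp: "w \<in> set p" using inp w by blast
  obtain v0 rest where pr: "p = v0 # rest" using p by (cases p) auto
  have "w \<noteq> v0" using w adjV pr by auto
  then have "w \<in> set rest" using wp pr by auto
  then obtain a1 b1 where rs: "rest = a1 @ w # b1" by (meson split_list)
  have a1: "a1 \<noteq> []" using rs w pr by auto
  have wk: "walk adj ((v0 # a1 @ [w]) @ b1)" using p pr rs by simp
  then have "walk adj (v0 # a1 @ [w])" unfolding walk_append by blast
  moreover have "distinct (v0 # a1 @ [w])" using p pr rs by auto
  moreover have "length (v0 # a1 @ [w]) \<ge> 3" using a1 by (cases a1) auto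
  moreover have "adj w v0" using w pr adj_sym by auto
  moreover have "set (v0 # a1 @ [w]) \<subseteq> V" using p pr rs by auto
  ultimately show ?thesis by (intro exI[of _ "v0 # a1 @ [w]"]) (auto simp: cyc_def)
qed

end



context sgraph begin

lemma ce:
  assumes k2: "k \<ge> 2" and kc: "k_connected V E k" and n3: "card V \<ge> 3" and nh: "\<not> hamiltonian V E"
  shows "\<exists>S\<subseteq>V. card S = k + 1 \<and> (\<forall>a\<in>S. \<forall>b\<in>S. \<not> adj a b) \<and>
           ((\<exists>a b. adj a b \<and> a \<notin> S \<and> b \<notin> S) \<or> card V \<le> 2 * k + 1)"
proof -
  have d2: "\<forall>y\<in>V. \<exists>a b. a \<noteq> b \<and> adj y a \<and> adj y b"
    using deg2[OF k2 kc n3] by blast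
  have Vne: "V \<noteq> {}" using n3 by auto
  obtain C0 where C0: "cyc adj C0" "set C0 \<subseteq> V" using cycle_exists[OF d2 Vne] by blast
  define P where "P l = (\<exists>C. cyc adj C \<and> set C \<subseteq> V \<and> length C = l)" for l
  have P0: "P (length C0)" using C0 P_def by blast
  have bnd: "\<forall>l. P l \<longrightarrow> l \<le> card V"
    unfolding P_def cyc_def using finV card_mono distinct_card by metis
  obtain L where L: "P L" "\<forall>l'. P l' \<longrightarrow> l' \<le> L" using Nat.ex_has_greatest_nat[OF P0 bnd] by blast
  then obtain C where C: "cyc adj C" "set C \<subseteq> V" "length C = L" unfolding P_def by blast
  have maxC: "length D \<le> length C" if "cyc adj D" "set D \<subseteq> V" for D
    using L(2) that C(3) unfolding P_def by blast
  have Cne: "C \<noteq> []" using C(1) by (auto simp: cyc_def)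
  have "set C \<noteq> V"
  proof
    assume sv: "set C = V"
    have "\<forall>i < length C - 1. {C ! i, C ! Suc i} \<in> E" using C(1) walk_nth by (auto simp: cyc_def)
    then have "hamiltonian V E" using C(1) sv unfolding hamiltonian_def cyc_def by blast
    then show False using nh by blast
  qed
  then obtain h where h: "h \<in> V" "h \<notin> set C" using C(2) by blast
  define RA where "RA x y = (adj x y \<and> x \<notin> set C \<and> y \<notin> set C)" for x y
  have RAsym: "RA x y \<Longrightarrow> RA y x" for x y unfolding RA_def using adj_sym by blast
  define H where "H = {v. RA\<^sup>*\<^sup>* h v}"
  have hH: "h \<in> H" by (simp add: H_def)
  have H_out: "v \<in> V \<and> v \<notin> set C" if "v \<in> H" for v
  proof -
    have "RA\<^sup>*\<^sup>* h v" using that H_def by simp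
    then show ?thesis
    proof (induction rule: rtranclp_induct)
      case base then show ?case using h by simp
    next
      case (step y z) then show ?case using adjV unfolding RA_def by blast
    qed
  qed
  have H_path: "\<exists>Q. Q \<noteq> [] \<and> hd Q = u \<and> last Q = u' \<and> distinct Q \<and> walk adj Q \<and> set Q \<subseteq> H"
    if "u \<in> H" "u' \<in> H" for u u'
  proof -
    have hu: "RA\<^sup>*\<^sup>* h u" "RA\<^sup>*\<^sup>* h u'" using that H_def by auto
    have "RA\<^sup>*\<^sup>* u h" using rtranclp_sym[OF RAsym hu(1)] by blast
    then have ru: "RA\<^sup>*\<^sup>* u u'" using hu(2) by simp
    obtain Q where Q: "Q \<noteq> []" "hd Q = u" "last Q = u'" "distinct Q" "walk RA Q"
      "set Q \<subseteq> {z. RA\<^sup>*\<^sup>* u z}" using path_exists[OF ru] by blast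
    have "set Q \<subseteq> H"
    proof
      fix z assume "z \<in> set Q"
      then have "RA\<^sup>*\<^sup>* u z" using Q(6) by blast
      then have "RA\<^sup>*\<^sup>* h z" using hu(1) by simp
      then show "z \<in> H" unfolding H_def by simp
    qed
    moreover have "walk adj Q" by (rule walk_mono[OF Q(5)]) (simp add: RA_def)
    ultimately show ?thesis using Q by blast
  qed
  define X where "X = {c \<in> set C. \<exists>u\<in>H. adj c u}"
  have R0: "c' \<notin> X" if cX: "c \<in> X" and cs: "csucc C c c'" for c c'
  proof
    assume c'X: "c' \<in> X"
    obtain ws where ws: "cyc adj ws" "set ws = set C" "length ws = length C" "hd ws = c'" "last ws = c"
      using rot_to[OF C(1) cs] by blast
    obtain u u' where uu: "u \<in> H" "adj c u" "u' \<in> H" "adj c' u'" using cX c'X X_def by blast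
    obtain Q where Q: "Q \<noteq> []" "hd Q = u" "last Q = u'" "distinct Q" "walk adj Q" "set Q \<subseteq> H"
      using H_path[OF uu(1,3)] by blast
    have dj: "set Q \<inter> set ws = {}" using Q(6) H_out ws(2) by blast
    have "cyc adj (ws @ Q) \<and> length (ws @ Q) > length ws"
      using extend_cyc[OF ws(1) Q(1,4,5) dj] uu ws Q adj_sym by auto
    moreover have "set (ws @ Q) \<subseteq> V" using ws C Q(6) H_out by auto
    ultimately show False using maxC ws(3) by fastforce
  qed
  have R12: False if x: "x1 \<in> X" "x2 \<in> X" "x1 \<noteq> x2" "csucc C x1 y1" "csucc C x2 y2"
      and alt: "adj y1 y2 \<or> (\<exists>y\<in>V. y \<notin> set C \<and> y \<notin> H \<and> adj y1 y \<and> adj y y2)" for x1 x2 y1 y2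
  proof -
    obtain ws where ws: "cyc adj ws" "set ws = set C" "length ws = length C"
      "\<forall>a b. csucc C a b \<longrightarrow> csucc ws a b" "hd ws = y1" "last ws = x1"
      using rot_to[OF C(1) x(4)] by blast
    have wsd: "distinct ws" "ws \<noteq> []" using ws(1) by (auto simp: cyc_def)
    obtain P1 P2 where PP: "ws = P1 @ P2" "P1 \<noteq> []" "P2 \<noteq> []" "last P1 = x2" "hd P2 = y2"
      "hd P1 = y1" "last P2 = x1"
      using csucc_split[OF wsd, of x2 y2] ws x by metis
    obtain u1 u2 where uu: "u1 \<in> H" "adj x1 u1" "u2 \<in> H" "adj x2 u2" using x X_def by blast
    obtain Q1 where Q1: "Q1 \<noteq> []" "hd Q1 = u1" "last Q1 = u2" "distinct Q1" "walk adj Q1" "set Q1 \<subseteq> H"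
      using H_path[OF uu(1,3)] by blast
    obtain Q2 where Q2: "distinct Q2" "walk adj Q2" "set Q2 \<inter> set C = {}" "set Q2 \<inter> H = {}" "set Q2 \<subseteq> V"
      "if Q2 = [] then adj (hd P1) (hd P2) else adj (hd P1) (hd Q2) \<and> adj (last Q2) (hd P2)"
    proof (cases "adj y1 y2")
      case True
      then show ?thesis using that[of "[]"] PP by simp
    next
      case False
      then obtain y where y: "y \<in> V" "y \<notin> set C" "y \<notin> H" "adj y1 y" "adj y y2" using alt by blast
      then show ?thesis using that[of "[y]"] PP by simp
    qed
    have dj1: "set Q1 \<inter> set (P1 @ P2) = {}" using Q1(6) H_out ws(2) PP(1) by blast
    have dj2: "set Q2 \<inter> set (P1 @ P2) = {}" using Q2(3) ws(2) PP(1) by blast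
    have dj3: "set Q1 \<inter> set Q2 = {}" using Q1(6) Q2(4) by blast
    have r: "cyc adj (rev P1 @ Q2 @ P2 @ Q1) \<and> length (rev P1 @ Q2 @ P2 @ Q1) > length (P1 @ P2)
     \<and> set (rev P1 @ Q2 @ P2 @ Q1) = set (P1 @ P2) \<union> set Q1 \<union> set Q2"
      apply (rule reroute[OF _ _ PP(2,3) Q1(1) Q1(4) Q2(1) Q1(5) Q2(2) dj1 dj2 dj3])
      using adj_sym ws(1) PP uu Q1 Q2(6) by auto
    moreover have "set (rev P1 @ Q2 @ P2 @ Q1) \<subseteq> V" using r ws(2) PP(1) C(2) Q1(6) H_out Q2(5) by auto
    ultimately show False using maxC ws(3) PP(1) by fastforce
  qed
  define sc where "sc c = (SOME c'. csucc C c c')" for c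
  have sc: "csucc C c (sc c)" if "c \<in> set C" for c
    unfolding sc_def using csucc_exists[OF that] by (rule someI_ex)
  have scC: "sc c \<in> set C" if "c \<in> set C" for c using sc[OF that] csucc_set by metis
  have sc_inj: "inj_on sc (set C)"
    by (rule inj_onI) (metis sc csucc_inj[OF C(1)])
  have XC: "X \<subseteq> set C" by (auto simp: X_def)
  have finC: "finite (set C)" by simp
  have cardX: "card X \<ge> k"
  proof (rule ccontr)
    assume "\<not> k \<le> card X"
    then have ck: "card X < k" by simp
    have XV: "X \<subseteq> V" using XC C(2) by blast
    have conn: "graph_connected (V - X) {e\<in>E. e \<subseteq> V - X}"
      using kc ck XV unfolding k_connected_def by blast
    obtain c where c: "c \<in> set C" "c \<notin> X"
    proof (cases "hd C \<in> X")
      case True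
      then show ?thesis using that R0 sc scC Cne hd_in_set by metis
    next
      case False then show ?thesis using that Cne hd_in_set by metis
    qed
    have hc: "h \<in> V - X" "c \<in> V - X" using h c C(2) XC by auto
    have reach: "(\<lambda>x w. {x, w} \<in> {e\<in>E. e \<subseteq> V - X})\<^sup>*\<^sup>* h c"
      using conn hc unfolding graph_connected_def by blast
    have "v \<in> H" if "(\<lambda>x w. {x, w} \<in> {e\<in>E. e \<subseteq> V - X})\<^sup>*\<^sup>* h v" for v
      using that
    proof (induction rule: rtranclp_induct)
      case base then show ?case using hH by simp
    next
      case (step y z)
      then have yz: "adj y z" "z \<notin> X" "y \<in> H" by auto
      have "z \<notin> set C"
      proof
        assume "z \<in> set C"
        then have "z \<in> X" using yz adj_sym unfolding X_def by blast
        then show False using yz by blast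
      qed
      then have "RA y z" using yz H_out unfolding RA_def by blast
      then show ?case using yz(3) unfolding H_def by simp
    qed
    then have "c \<in> H" using reach by blast
    then show False using H_out c by blast
  qed
  have cscX: "card (sc ` X) = card X" using card_image inj_on_subset[OF sc_inj XC] by blast
  obtain Z where Z: "Z \<subseteq> sc ` X" "card Z = k" "finite Z"
    using obtain_subset_with_card_n[of k "sc ` X"] cardX cscX by auto
  have Zf: "z \<in> set C \<and> z \<notin> X" if "z \<in> Z" for z
    using that Z(1) R0 sc scC XC by blast
  have Zind: "\<not> adj a b" if aZ: "a \<in> Z" and bZ: "b \<in> Z" for a b
  proof
    assume ab: "adj a b"
    obtain x1 x2 where xx: "x1 \<in> X" "x2 \<in> X" "a = sc x1" "b = sc x2" using aZ bZ Z(1) by blast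
    have "x1 \<noteq> x2" using ab adjV xx by blast
    then show False using R12[OF xx(1,2) _ sc sc] xx ab XC by blast
  qed
  have HZ: "\<not> adj u z" if "u \<in> H" "z \<in> Z" for u z
    using that Zf adj_sym unfolding X_def by blast
  have ZV: "Z \<subseteq> V" using Zf C(2) by blast
  have goodS: "insert g Z \<subseteq> V \<and> card (insert g Z) = k + 1 \<and> (\<forall>a\<in>insert g Z. \<forall>b\<in>insert g Z. \<not> adj a b)"
    if "g \<in> H" for g
  proof -
    have "g \<notin> Z" using that H_out Zf by blast
    then have "card (insert g Z) = k + 1" using Z by simp
    moreover have "\<forall>a\<in>insert g Z. \<forall>b\<in>insert g Z. \<not> adj a b"
      using Zind HZ that adj_sym adjV by blast
    ultimately show ?thesis using ZV that H_out by blast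
  qed
  have "X \<noteq> {}" using cardX k2 by auto
  then obtain x0 u0 where xu: "x0 \<in> X" "u0 \<in> H" "adj x0 u0" unfolding X_def by blast
  show ?thesis
  proof (cases "\<exists>g\<in>H. g \<noteq> u0")
    case True
    then obtain g where g: "g \<in> H" "g \<noteq> u0" by blast
    have "x0 \<notin> insert g Z" "u0 \<notin> insert g Z" using g xu H_out Zf XC by blast+
    then show ?thesis using goodS[OF g(1)] xu by blast
  next
    case False
    then have "\<forall>g\<in>H. g = u0" by blast
    then have "h = u0" using hH by blast
    then have Hh: "H = {h}" using \<open>\<forall>g\<in>H. g = u0\<close> hH by blast
    let ?S = "insert h Z"
    show ?thesis
    proof (cases "\<exists>a b. adj a b \<and> a \<notin> ?S \<and> b \<notin> ?S")
      case True then show ?thesis using goodS[OF hH] by blast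
    next
      case False
      then have noT: "a \<in> ?S \<or> b \<in> ?S" if "adj a b" for a b using that by blast
      have mapZ: "sc ` (set C - Z) \<subseteq> Z"
      proof
        fix w assume "w \<in> sc ` (set C - Z)"
        then obtain c where c: "c \<in> set C" "c \<notin> Z" "w = sc c" by blast
        have "adj c w" using csucc_adj[OF C(1) sc[OF c(1)]] c by simp
        moreover have "c \<notin> ?S" using c h by auto
        ultimately have "w \<in> ?S" using noT by blast
        moreover have "w \<noteq> h" using scC c h by blast
        ultimately show "w \<in> Z" by blast
      qed
      have "card (set C - Z) \<le> card Z"
        using card_inj_on_le[OF inj_on_subset[OF sc_inj] mapZ Z(3)] by blast
      moreover have "card (set C) = card Z + card (set C - Z)"
        using Zf Z(3) finC by (metis card_Diff_subset card_mono diff_add_inverse le_add_diff_inverse subsetI)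
      ultimately have cC: "card (set C) \<le> 2 * k" using Z(2) by linarith
      have VC: "V \<subseteq> insert h (set C)"
      proof
        fix y assume yV: "y \<in> V"
        show "y \<in> insert h (set C)"
        proof (rule ccontr)
          assume yn: "y \<notin> insert h (set C)"
          obtain a b where ab: "a \<noteq> b" "adj y a" "adj y b" using d2 yV by blast
          have yS: "y \<notin> ?S" using yn Zf by blast
          have notH: "v \<noteq> h" if "adj y v" for v
          proof
            assume "v = h"
            then have "RA h y" using that adj_sym yn h unfolding RA_def by blast
            then have "y \<in> H" unfolding H_def by simp
            then show False using Hh yn by blast
          qed
          have aZ: "a \<in> Z" "b \<in> Z" using noT ab yS notH by blast+
          obtain x1 x2 where xx: "x1 \<in> X" "x2 \<in> X" "a = sc x1" "b = sc x2" using aZ Z(1) by blast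
          have "x1 \<noteq> x2" using ab xx by blast
          moreover have "\<exists>y\<in>V. y \<notin> set C \<and> y \<notin> H \<and> adj a y \<and> adj y b"
            using yV yn Hh ab adj_sym by blast
          ultimately show False using R12[OF xx(1,2) _ sc sc] xx XC by blast
        qed
      qed
      have "card V \<le> card (insert h (set C))" using card_mono[OF _ VC] by simp
      also have "\<dots> \<le> 2 * k + 1" using cC card_insert_le finC
        by (metis Suc_eq_plus1 card_insert_if finite_set le_SucI not_less_eq_eq)
      finally show ?thesis using goodS[OF hH] by blast
    qed
  qed
qed

end



lemma amgm: fixes s D K :: real assumes "K > 0"
  shows "D * s \<le> s^2 / (2*K) + K * D^2 / 2"
    and "s \<noteq> K * D \<Longrightarrow> D * s < s^2 / (2*K) + K * D^2 / 2"
proof -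
  have e: "s^2 / (2*K) + K * D^2 / 2 - D * s = (s - K*D)^2 / (2*K)"
    using assms by (simp add: field_simps power2_eq_square)
  show "D * s \<le> s^2 / (2*K) + K * D^2 / 2" using e assms
    by (metis diff_ge_0_iff_ge half_gt_zero_iff less_eq_real_def divide_nonneg_pos zero_le_power2 mult_pos_pos zero_less_numeral)
  assume "s \<noteq> K * D"
  then have "(s - K*D)^2 > 0" by simp
  then show "D * s < s^2 / (2*K) + K * D^2 / 2" using e assms
    by (metis diff_gt_0_iff_gt divide_pos_pos mult_pos_pos zero_less_numeral)
qed

lemma numeric:
  fixes K d D r s m t Z F FT I :: real
  assumes K: "K \<ge> 2" and d: "d \<ge> 1" and dD: "d \<le> D" and r: "r \<ge> 0"
    and Z: "Z \<le> D * s + r * D^2"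
    and F: "F \<ge> (K+1) * d^3 + FT" and FT1: "FT \<ge> r * d^3" and FT2: "FT \<ge> d^2 * t"
    and I: "I \<ge> (K+1) / D + r / D"
    and s1: "s \<ge> (K+1) * d" and sm: "s \<le> m" and mt: "m \<le> t" and tr: "t \<le> r * D"
    and alt: "s < m \<or> r \<le> K"
  shows "\<not> (Z \<ge> r * D^2 + m^2 / (2 * (K + 1)) + (K + 1) * D^3 / (2 * d)
     \<or> F \<le> r * d^3 + d * (2 * (K + 1)^2 * d^2 - m^2) / (K + 1)
     \<or> F \<le> r * d^3 + d / (K + 1) * (2 * (K + 1) * ((K + 1) * d^2 + m^2 / r) - m^2 - 2 * (K + 1) * r * D^2)
     \<or> I \<le> r / D + (2 * (K + 1)^2 * d^2 - m^2) / ((K + 1) * D^3)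
     \<or> I \<le> r / D + 1 / ((K + 1) * D^3) * (2 * (K + 1) * ((K + 1) * d^2 + m^2 / r) - m^2 - 2 * (K + 1) * r * D^2))"
proof -
  have Dpos: "D > 0" using d dD by linarith
  have K1: "K + 1 > 0" using K by linarith
  have m1: "m \<ge> (K+1) * d" using s1 sm by linarith
  have s0: "s \<ge> 0" using s1 K d by (smt (verit) mult_nonneg_nonneg)
  have br: "2 * (K + 1) * ((K + 1) * d^2 + m^2 / r) - m^2 - 2 * (K + 1) * r * D^2 \<le> 2 * (K + 1)^2 * d^2 - m^2"
  proof -
    have "m^2 / r \<le> r * D^2"
    proof (cases "r = 0")
      case True then show ?thesis by simp
    next
      case False
      then have rp: "r > 0" using r by simp
      have m0: "m \<ge> 0" using s0 sm by linarith
      have "m^2 \<le> (r*D)^2" using m0 mt tr by (intro power_mono) auto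
      then show ?thesis using rp by (simp add: field_simps power2_eq_square)
    qed
    then have "2 * (K + 1) * (m^2 / r) \<le> 2 * (K + 1) * (r * D^2)" using K1 by (intro mult_left_mono) auto
    then show ?thesis by (simp add: algebra_simps power2_eq_square)
  qed
  have c1: "Z < r * D^2 + m^2 / (2 * (K + 1)) + (K + 1) * D^3 / (2 * d)"
  proof -
    have "D * s < m^2 / (2 * (K + 1)) + (K + 1) * D^2 / 2"
    proof (cases "s < m")
      case True
      have "s^2 < m^2" using True s0 by (simp add: power_strict_mono)
      then have "s^2 / (2*(K+1)) < m^2 / (2*(K+1))" using K1 by (simp add: divide_strict_right_mono)
      then show ?thesis using amgm(1)[OF K1, of D s] by linarith
    next
      case False
      then have rK: "r \<le> K" using alt by simp
      have "s \<le> K * D" using sm mt tr rK Dpos by (smt (verit) mult_right_mono)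
      then have "s \<noteq> (K+1) * D" using Dpos by (simp add: algebra_simps)
      then have "D * s < s^2 / (2*(K+1)) + (K+1) * D^2 / 2" using amgm(2)[OF K1] by blast
      moreover have "s^2 \<le> m^2" using s0 sm by (simp add: power_mono)
      then have "s^2 / (2*(K+1)) \<le> m^2 / (2*(K+1))" using K1 by (simp add: divide_right_mono)
      ultimately show ?thesis by linarith
    qed
    moreover have "(K + 1) * D^2 / 2 \<le> (K + 1) * D^3 / (2 * d)"
    proof -
      have "D^2 * d \<le> D^2 * D" using dD by (simp add: mult_left_mono)
      then have "D^2 \<le> D^3 / d" using d by (simp add: field_simps power2_eq_square power3_eq_cube)
      then have "(K + 1) * D^2 \<le> (K + 1) * (D^3 / d)" using K1 by (intro mult_left_mono) auto
      then show ?thesis by simp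
    qed
    ultimately show ?thesis using Z by linarith
  qed
  have c2: "F > r * d^3 + d * (2 * (K + 1)^2 * d^2 - m^2) / (K + 1)"
  proof (cases "s < m")
    case True
    then have "m > (K+1) * d" using s1 by linarith
    then have "m^2 > ((K+1) * d)^2" using K1 d by (intro power_strict_mono) auto
    then have "d * m^2 > d * ((K+1)*d)^2" using d by simp
    then have "d * (2 * (K + 1)^2 * d^2 - m^2) / (K + 1) < (K+1) * d^3"
      using K1 by (simp add: field_simps power2_eq_square power3_eq_cube)
    then show ?thesis using F FT1 by linarith
  next
    case False
    then have rK: "r \<le> K" using alt by simp
    have "m^2 \<ge> ((K+1) * d)^2" using K1 d m1 by (intro power_mono) auto
    then have "d * m^2 \<ge> d * ((K+1)*d)^2" using d by simp
    then have a: "d * (2 * (K + 1)^2 * d^2 - m^2) / (K + 1) \<le> (K+1) * d^3"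
      using K1 by (simp add: field_simps power2_eq_square power3_eq_cube)
    have "FT \<ge> d^2 * ((K+1) * d)" using FT2 mt m1 by (smt (verit) mult_left_mono zero_le_power2)
    moreover have "d^2 * ((K+1) * d) > r * d^3"
    proof -
      have "d^3 > 0" using d by simp
      then have "r * d^3 < (K+1) * d^3" using rK by simp
      then show ?thesis by (simp add: power2_eq_square power3_eq_cube algebra_simps)
    qed
    ultimately show ?thesis using F a by linarith
  qed
  have c3: "F > r * d^3 + d / (K + 1) * (2 * (K + 1) * ((K + 1) * d^2 + m^2 / r) - m^2 - 2 * (K + 1) * r * D^2)"
  proof -
    have "d / (K + 1) * (2 * (K + 1) * ((K + 1) * d^2 + m^2 / r) - m^2 - 2 * (K + 1) * r * D^2)
        \<le> d / (K + 1) * (2 * (K + 1)^2 * d^2 - m^2)"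
      using br d K1 by (intro mult_left_mono) auto
    then show ?thesis using c2 by (simp add: field_simps)
  qed
  have c4: "I > r / D + (2 * (K + 1)^2 * d^2 - m^2) / ((K + 1) * D^3)"
  proof -
    have dl: "d^2 / D^3 \<le> 1 / D"
    proof -
      have "d^2 \<le> D^2" using d dD by (intro power_mono) auto
      then show ?thesis using Dpos by (simp add: field_simps power2_eq_square power3_eq_cube)
    qed
    have mm: "m^2 \<ge> ((K+1) * d)^2" using K1 d m1 by (intro power_mono) auto
    have "(2 * (K + 1)^2 * d^2 - m^2) / ((K + 1) * D^3) < (K+1) / D"
    proof (cases "s < m")
      case True
      then have "m > (K+1) * d" using s1 by linarith
      then have "m^2 > ((K+1) * d)^2" using K1 d by (intro power_strict_mono) auto
      then have "2 * (K + 1)^2 * d^2 - m^2 < (K+1)^2 * d^2" by (simp add: power_mult_distrib mult.commute)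
      then have "(2 * (K + 1)^2 * d^2 - m^2) / ((K + 1) * D^3) < (K+1)^2 * d^2 / ((K + 1) * D^3)"
        using K1 Dpos by (intro divide_strict_right_mono) auto
      also have "\<dots> = (K+1) * (d^2 / D^3)" using K1 by (simp add: power2_eq_square)
      also have "\<dots> \<le> (K+1) * (1 / D)" using dl K1 by (intro mult_left_mono) auto
      also have "\<dots> = (K+1) / D" by simp
      finally show ?thesis .
    next
      case False
      then have rK: "r \<le> K" using alt by simp
      have "(K+1) * d \<le> K * D" using m1 mt tr rK Dpos by (smt (verit) mult_right_mono)
      have dlt: "d < D"
      proof (rule ccontr)
        assume "\<not> d < D"
        then have "K * D \<le> K * d" using K by (intro mult_left_mono) auto
        then show False using \<open>(K+1) * d \<le> K * D\<close> d by (simp add: algebra_simps)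
      qed
      have "2 * (K + 1)^2 * d^2 - m^2 \<le> (K+1)^2 * d^2" using mm by (simp add: power_mult_distrib mult.commute)
      then have "(2 * (K + 1)^2 * d^2 - m^2) / ((K + 1) * D^3) \<le> (K+1)^2 * d^2 / ((K + 1) * D^3)"
        using K1 Dpos by (intro divide_right_mono) auto
      also have "\<dots> = (K+1) * (d^2 / D^3)" using K1 by (simp add: power2_eq_square)
      also have "\<dots> < (K+1) / D"
      proof -
        have "d^2 < D^2" using d dlt by (intro power_strict_mono) auto
        then have "d^2 / D^3 < 1 / D" using Dpos by (simp add: field_simps power2_eq_square power3_eq_cube)
        then have "(K+1) * (d^2 / D^3) < (K+1) * (1 / D)" using K1 by (intro mult_strict_left_mono) auto
        then show ?thesis by simp
      qed
      finally show ?thesis .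
    qed
    then show ?thesis using I by (simp add: field_simps)
  qed
  have c5: "I > r / D + 1 / ((K + 1) * D^3) * (2 * (K + 1) * ((K + 1) * d^2 + m^2 / r) - m^2 - 2 * (K + 1) * r * D^2)"
  proof -
    have "1 / ((K + 1) * D^3) * (2 * (K + 1) * ((K + 1) * d^2 + m^2 / r) - m^2 - 2 * (K + 1) * r * D^2)
        \<le> 1 / ((K + 1) * D^3) * (2 * (K + 1)^2 * d^2 - m^2)"
      using br Dpos K1 by (intro mult_left_mono) auto
    then show ?thesis using c4 by simp
  qed
  show ?thesis using c1 c2 c3 c4 c5 by linarith
qed




context sgraph begin

lemma finE: "finite E"
proof -
  have "E \<subseteq> Pow V"
  proof
    fix e assume "e \<in> E"
    then obtain u v where "e = {u, v}" "u \<in> V" "v \<in> V" using sg unfolding simple_graph_def by blast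
    then show "e \<in> Pow V" by simp
  qed
  then show ?thesis using finV finite_subset by blast
qed

lemma edge_count:
  assumes SV: "S \<subseteq> V" and ind: "\<forall>a\<in>S. \<forall>b\<in>S. \<not> adj a b"
  shows "(\<Sum>u\<in>S. degree V E u) \<le> card {e\<in>E. e \<inter> S \<noteq> {}}"
    and "card E \<le> (\<Sum>u\<in>V-S. degree V E u)"
proof -
  define N where "N u = {v\<in>V. adj u v}" for u
  have fN: "finite (N u)" for u using finV by (simp add: N_def)
  have fS: "finite S" using SV finV finite_subset by blast
  have deg: "degree V E u = card (N u)" for u by (simp add: degree_def N_def)
  define f where "f p = {fst p, snd p}" for p :: "'a \<times> 'a"
  have "(\<Sum>u\<in>S. degree V E u) = card (SIGMA u:S. N u)" using fS fN deg by simp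
  also have "\<dots> \<le> card {e\<in>E. e \<inter> S \<noteq> {}}"
  proof (rule card_inj_on_le)
    show "inj_on f (SIGMA u:S. N u)"
    proof (rule inj_onI)
      fix p q assume p: "p \<in> (SIGMA u:S. N u)" and q: "q \<in> (SIGMA u:S. N u)" and e: "f p = f q"
      obtain a b where ab: "p = (a, b)" "a \<in> S" "adj a b" using p by (cases p) (auto simp: N_def)
      obtain c d where cd: "q = (c, d)" "c \<in> S" "adj c d" using q by (cases q) (auto simp: N_def)
      have "{a, b} = {c, d}" using e ab cd by (simp add: f_def)
      then have "(a = c \<and> b = d) \<or> (a = d \<and> b = c)" by (metis doubleton_eq_iff)
      then show "p = q" using ab cd ind by blast
    qed
    show "f ` (SIGMA u:S. N u) \<subseteq> {e\<in>E. e \<inter> S \<noteq> {}}" by (auto simp: f_def N_def)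
    show "finite {e\<in>E. e \<inter> S \<noteq> {}}" using finE by simp
  qed
  finally show "(\<Sum>u\<in>S. degree V E u) \<le> card {e\<in>E. e \<inter> S \<noteq> {}}" .
  have "E \<subseteq> f ` (SIGMA u:V-S. N u)"
  proof
    fix e assume eE: "e \<in> E"
    then obtain a b where ab: "e = {a, b}" "a \<noteq> b" "a \<in> V" "b \<in> V" using sg unfolding simple_graph_def by blast
    show "e \<in> f ` (SIGMA u:V-S. N u)"
    proof (cases "a \<in> S")
      case True
      then have "b \<notin> S" using ind eE ab by blast
      then have "(b, a) \<in> (SIGMA u:V-S. N u)" using ab eE by (auto simp: N_def insert_commute)
      then show ?thesis using ab by (intro rev_image_eqI[of "(b, a)"]) (simp_all add: f_def insert_commute)
    next
      case False
      then have "(a, b) \<in> (SIGMA u:V-S. N u)" using ab eE by (auto simp: N_def)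
      then show ?thesis using ab by (intro rev_image_eqI[of "(a, b)"]) (simp_all add: f_def)
    qed
  qed
  have fVS: "finite (V - S)" using finV by simp
  have fSig: "finite (SIGMA u:V-S. N u)" using fVS fN by blast
  have "card E \<le> card (f ` (SIGMA u:V-S. N u))" using fSig \<open>E \<subseteq> _\<close> by (intro card_mono) auto
  also have "\<dots> \<le> card (SIGMA u:V-S. N u)" using fSig by (rule card_image_le)
  also have "\<dots> = (\<Sum>u\<in>V-S. card (N u))" using card_SigmaI[OF fVS] fN by blast
  also have "\<dots> = (\<Sum>u\<in>V-S. degree V E u)" using deg by simp
  finally show "card E \<le> (\<Sum>u\<in>V-S. degree V E u)" .
qed

end




theorem theorem2:
  fixes V :: "'a set" and E :: "'a set set" and k :: nat
  assumes graph: "simple_graph V E"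
    and k2: "k \<ge> 2"
    and kconn: "k_connected V E k"
    and n3: "card V \<ge> 3"
  defines "n \<equiv> real (card V)"
    and "m \<equiv> real (card E)"
    and "\<delta> \<equiv> real (min_degree V E)"
    and "\<Delta> \<equiv> real (max_degree V E)"
    and "K \<equiv> real k"
  assumes cond:
    "zagreb1 V E \<ge> (n - K - 1) * \<Delta>^2 + m^2 / (2 * (K + 1)) + (K + 1) * \<Delta>^3 / (2 * \<delta>)
     \<or> forgotten_index V E \<le> (n - K - 1) * \<delta>^3
          + \<delta> * (2 * (K + 1)^2 * \<delta>^2 - m^2) / (K + 1)
     \<or> forgotten_index V E \<le> (n - K - 1) * \<delta>^3
          + \<delta> / (K + 1) * (2 * (K + 1) * ((K + 1) * \<delta>^2 + m^2 / (n - K - 1))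
                            - m^2 - 2 * (K + 1) * (n - K - 1) * \<Delta>^2)
     \<or> inverse_degree V E \<le> (n - K - 1) / \<Delta>
          + (2 * (K + 1)^2 * \<delta>^2 - m^2) / ((K + 1) * \<Delta>^3)
     \<or> inverse_degree V E \<le> (n - K - 1) / \<Delta>
          + 1 / ((K + 1) * \<Delta>^3) * (2 * (K + 1) * ((K + 1) * \<delta>^2 + m^2 / (n - K - 1))
                            - m^2 - 2 * (K + 1) * (n - K - 1) * \<Delta>^2)"
  shows "hamiltonian V E"
proof (rule ccontr)
  assume nh: "\<not> hamiltonian V E"
  interpret G: sgraph V E using graph by (rule sgraph.intro)
  obtain S where S: "S \<subseteq> V" "card S = k + 1" "\<forall>a\<in>S. \<forall>b\<in>S. {a, b} \<notin> E"
    and alt0: "(\<exists>a b. {a, b} \<in> E \<and> a \<notin> S \<and> b \<notin> S) \<or> card V \<le> 2 * k + 1"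
    using G.ce[OF k2 kconn n3 nh] by blast
  define dg where "dg u = real (degree V E u)" for u
  have finV: "finite V" by (rule G.finV)
  have Vne: "V \<noteq> {}" using n3 by auto
  have fS: "finite S" using S(1) finV finite_subset by blast
  define T where "T = V - S"
  have fT: "finite T" using finV by (simp add: T_def)
  have deg2: "degree V E u \<ge> 2" if uV: "u \<in> V" for u
  proof -
    obtain a b where ab: "a \<noteq> b" "{u, a} \<in> E" "{u, b} \<in> E" using G.deg2[OF k2 kconn n3 uV] by blast
    have "{a, b} \<subseteq> {v\<in>V. {u, v} \<in> E}" using ab G.adjV by blast
    then have "card {a, b} \<le> card {v\<in>V. {u, v} \<in> E}" using finV by (intro card_mono) auto
    then show ?thesis using ab(1) by (simp add: degree_def)
  qed
  have dmin: "\<delta> \<le> dg u" if "u \<in> V" for u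
    unfolding \<delta>_def dg_def min_degree_def using finV that by simp
  have dmax: "dg u \<le> \<Delta>" if "u \<in> V" for u
    unfolding \<Delta>_def dg_def max_degree_def using finV that by simp
  have d1: "\<delta> \<ge> 1"
  proof -
    have "min_degree V E \<in> degree V E ` V" unfolding min_degree_def using finV Vne by (intro Min_in) auto
    then obtain u where "u \<in> V" "min_degree V E = degree V E u" by blast
    then show ?thesis using deg2 unfolding \<delta>_def by fastforce
  qed
  have dD: "\<delta> \<le> \<Delta>" using dmin dmax Vne by (meson equals0I order_trans)
  have Dpos: "\<Delta> > 0" using d1 dD by linarith
  have dpos: "dg u > 0" if "u \<in> V" for u using dmin[OF that] d1 by linarith
  have cS: "card S \<le> card V" using card_mono[OF finV S(1)] .
  define r where "r = real (card T)"
  have cT: "card T = card V - card S" unfolding T_def using card_Diff_subset[OF fS S(1)] .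
  have nr: "n - K - 1 = r" unfolding r_def n_def K_def using cT cS S(2) by simp
  have cSK: "real (card S) = K + 1" using S(2) unfolding K_def by simp
  define s where "s = (\<Sum>u\<in>S. dg u)"
  define t where "t = (\<Sum>u\<in>T. dg u)"
  have ec1: "(\<Sum>u\<in>S. degree V E u) \<le> card {e\<in>E. e \<inter> S \<noteq> {}}"
    and ec2: "card E \<le> (\<Sum>u\<in>V-S. degree V E u)" using G.edge_count[OF S(1) S(3)] by blast+
  have sE: "s = real (\<Sum>u\<in>S. degree V E u)" unfolding s_def dg_def by simp
  have tE: "t = real (\<Sum>u\<in>V-S. degree V E u)" unfolding t_def dg_def T_def by simp
  have sub: "{e\<in>E. e \<inter> S \<noteq> {}} \<subseteq> E" by blast
  have c1: "card {e\<in>E. e \<inter> S \<noteq> {}} \<le> card E" using card_mono[OF G.finE sub] .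
  have sm: "s \<le> m" using ec1 c1 unfolding sE m_def by linarith
  have mt: "m \<le> t" using ec2 unfolding tE m_def by linarith
  have alt: "s < m \<or> r \<le> K"
  proof (cases "\<exists>a b. {a, b} \<in> E \<and> a \<notin> S \<and> b \<notin> S")
    case True
    then obtain a b where ab: "{a, b} \<in> E" "a \<notin> S" "b \<notin> S" by blast
    then have "{a, b} \<notin> {e\<in>E. e \<inter> S \<noteq> {}}" by blast
    then have "{e\<in>E. e \<inter> S \<noteq> {}} \<subset> E" using ab(1) sub by blast
    then have "card {e\<in>E. e \<inter> S \<noteq> {}} < card E" using psubset_card_mono[OF G.finE] by blast
    then show ?thesis using ec1 unfolding sE m_def by linarith
  next
    case False
    then have "card V \<le> 2 * k + 1" using alt0 by blast
    then have "card T \<le> k" using cT S(2) by linarith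
    then show ?thesis unfolding r_def K_def by simp
  qed
  have TV: "T \<subseteq> V" unfolding T_def by blast
  have split: "(\<Sum>u\<in>V. g u) = (\<Sum>u\<in>T. g u) + (\<Sum>u\<in>S. g u)" for g :: "'a \<Rightarrow> real"
    unfolding T_def using sum.subset_diff[OF S(1) finV] by simp
  have Zs: "zagreb1 V E \<le> \<Delta> * s + r * \<Delta>^2"
  proof -
    have "zagreb1 V E = (\<Sum>u\<in>T. dg u ^ 2) + (\<Sum>u\<in>S. dg u ^ 2)" unfolding zagreb1_def dg_def by (rule split)
    moreover have "(\<Sum>u\<in>S. dg u ^ 2) \<le> (\<Sum>u\<in>S. \<Delta> * dg u)"
    proof (rule sum_mono)
      fix u assume "u \<in> S"
      then have "u \<in> V" using S(1) by blast
      then show "dg u ^ 2 \<le> \<Delta> * dg u" using dmax dpos by (simp add: power2_eq_square mult_right_mono)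
    qed
    moreover have "(\<Sum>u\<in>S. \<Delta> * dg u) = \<Delta> * s" unfolding s_def by (simp add: sum_distrib_left)
    moreover have "(\<Sum>u\<in>T. dg u ^ 2) \<le> r * \<Delta>^2"
      unfolding r_def
    proof (rule sum_bounded_above)
      fix u assume "u \<in> T"
      then have "u \<in> V" using TV by blast
      then show "dg u ^ 2 \<le> \<Delta>^2" using dmax dpos by (intro power_mono) (auto simp: less_imp_le)
    qed
    ultimately show ?thesis by linarith
  qed
  define FT where "FT = (\<Sum>u\<in>T. dg u ^ 3)"
  have Fs: "forgotten_index V E \<ge> (K+1) * \<delta>^3 + FT"
  proof -
    have "forgotten_index V E = FT + (\<Sum>u\<in>S. dg u ^ 3)" unfolding forgotten_index_def dg_def FT_def by (rule split)
    moreover have "real (card S) * \<delta>^3 \<le> (\<Sum>u\<in>S. dg u ^ 3)"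
    proof (rule sum_bounded_below)
      fix u assume "u \<in> S"
      then have "u \<in> V" using S(1) by blast
      then show "\<delta>^3 \<le> dg u ^ 3" using dmin d1 by (intro power_mono) auto
    qed
    ultimately show ?thesis using cSK by simp
  qed
  have FT1: "FT \<ge> r * \<delta>^3" unfolding FT_def r_def
  proof (rule sum_bounded_below)
    fix u assume "u \<in> T"
    then have "u \<in> V" using TV by blast
    then show "\<delta>^3 \<le> dg u ^ 3" using dmin d1 by (intro power_mono) auto
  qed
  have FT2: "FT \<ge> \<delta>^2 * t"
  proof -
    have "(\<Sum>u\<in>T. \<delta>^2 * dg u) \<le> FT" unfolding FT_def
    proof (rule sum_mono)
      fix u assume "u \<in> T"
      then have uV: "u \<in> V" using TV by blast
      have "\<delta>^2 \<le> dg u ^ 2" using dmin[OF uV] d1 by (intro power_mono) auto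
      then have "\<delta>^2 * dg u \<le> dg u ^ 2 * dg u" using dpos[OF uV] by (intro mult_right_mono) auto
      then show "\<delta>^2 * dg u \<le> dg u ^ 3" by (simp add: power2_eq_square power3_eq_cube)
    qed
    then show ?thesis unfolding t_def by (simp add: sum_distrib_left)
  qed
  have Is: "inverse_degree V E \<ge> (K+1) / \<Delta> + r / \<Delta>"
  proof -
    have "inverse_degree V E = (\<Sum>u\<in>T. 1 / dg u) + (\<Sum>u\<in>S. 1 / dg u)" unfolding inverse_degree_def dg_def by (rule split)
    moreover have "real (card S) * (1 / \<Delta>) \<le> (\<Sum>u\<in>S. 1 / dg u)"
    proof (rule sum_bounded_below)
      fix u assume "u \<in> S"
      then have "u \<in> V" using S(1) by blast
      then show "1 / \<Delta> \<le> 1 / dg u" using dmax dpos Dpos by (intro divide_left_mono) auto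
    qed
    moreover have "real (card T) * (1 / \<Delta>) \<le> (\<Sum>u\<in>T. 1 / dg u)"
    proof (rule sum_bounded_below)
      fix u assume "u \<in> T"
      then have "u \<in> V" using TV by blast
      then show "1 / \<Delta> \<le> 1 / dg u" using dmax dpos Dpos by (intro divide_left_mono) auto
    qed
    ultimately show ?thesis using cSK unfolding r_def by simp
  qed
  have s1: "s \<ge> (K+1) * \<delta>"
  proof -
    have "real (card S) * \<delta> \<le> s" unfolding s_def
    proof (rule sum_bounded_below)
      fix u assume "u \<in> S"
      then have "u \<in> V" using S(1) by blast
      then show "\<delta> \<le> dg u" using dmin by blast
    qed
    then show ?thesis using cSK by simp
  qed
  have tr: "t \<le> r * \<Delta>" unfolding t_def r_def
  proof (rule sum_bounded_above)
    fix u assume "u \<in> T"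
    then have "u \<in> V" using TV by blast
    then show "dg u \<le> \<Delta>" using dmax by blast
  qed
  have K2: "K \<ge> 2" using k2 unfolding K_def by simp
  have r0: "r \<ge> 0" unfolding r_def by simp
  have "\<not> (zagreb1 V E \<ge> r * \<Delta>^2 + m^2 / (2 * (K + 1)) + (K + 1) * \<Delta>^3 / (2 * \<delta>)
     \<or> forgotten_index V E \<le> r * \<delta>^3 + \<delta> * (2 * (K + 1)^2 * \<delta>^2 - m^2) / (K + 1)
     \<or> forgotten_index V E \<le> r * \<delta>^3 + \<delta> / (K + 1) * (2 * (K + 1) * ((K + 1) * \<delta>^2 + m^2 / r) - m^2 - 2 * (K + 1) * r * \<Delta>^2)
     \<or> inverse_degree V E \<le> r / \<Delta> + (2 * (K + 1)^2 * \<delta>^2 - m^2) / ((K + 1) * \<Delta>^3)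
     \<or> inverse_degree V E \<le> r / \<Delta> + 1 / ((K + 1) * \<Delta>^3) * (2 * (K + 1) * ((K + 1) * \<delta>^2 + m^2 / r) - m^2 - 2 * (K + 1) * r * \<Delta>^2))"
    by (rule numeric[OF K2 d1 dD r0 Zs Fs FT1 FT2 Is s1 sm mt tr alt])
  then show False using cond unfolding nr by blast
qed


end
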